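(* Let $A,B$ be finite groups. (1) If $B$ is SMP, then $A\times B$ is MP if and only if $A$ is MP. (2) $A\times B$ is SMP if and only if both $A$ and $B$ are SMP.
   Context: A group $G$ has the Magnus Property (MP) if whenever $x,y\in G$ have the same normal closure in $G$, $x$ is conjugate in $G$ to $y$ or to $y^{-1}$; it has the Strong Magnus Property (SMP) if whenever $x,y\in G$ have the same normal closure, $x$ is conjugate to $y$. *)

theory Defs
  imports "HOL-Algebra.Algebra"
begin

definition normal_closure :: "('a, 'c) monoid_scheme \<Rightarrow> 'a set \<Rightarrow> 'a set" where
  "normal_closure G S = \<Inter> {N. N \<lhd> G \<and> S \<subseteq> N}"

definition conj_in :: "('a, 'c) monoid_scheme \<Rightarrow> 'a \<Rightarrow> 'a \<Rightarrow> bool" where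
  "conj_in G x y \<longleftrightarrow> (\<exists>g \<in> carrier G. y = g \<otimes>\<^bsub>G\<^esub> x \<otimes>\<^bsub>G\<^esub> inv\<^bsub>G\<^esub> g)"

definition magnus_property :: "('a, 'c) monoid_scheme \<Rightarrow> bool" where
  "magnus_property G \<longleftrightarrow> (\<forall>x \<in> carrier G. \<forall>y \<in> carrier G.
     normal_closure G {x} = normal_closure G {y} \<longrightarrow>
       conj_in G x y \<or> conj_in G x (inv\<^bsub>G\<^esub> y))"

definition strong_magnus_property :: "('a, 'c) monoid_scheme \<Rightarrow> bool" where
  "strong_magnus_property G \<longleftrightarrow> (\<forall>x \<in> carrier G. \<forall>y \<in> carrier G.
     normal_closure G {x} = normal_closure G {y} \<longrightarrow> conj_in G x y)"

end

theory Submission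
  imports Defs
begin

lemma nc_iff:
  "normal_closure G {x} = normal_closure G {y} \<longleftrightarrow> (\<forall>N. N \<lhd> G \<longrightarrow> (x \<in> N \<longleftrightarrow> y \<in> N))"
proof
  assume h: "normal_closure G {x} = normal_closure G {y}"
  show "\<forall>N. N \<lhd> G \<longrightarrow> (x \<in> N \<longleftrightarrow> y \<in> N)"
  proof (intro allI impI)
    fix N assume N: "N \<lhd> G"
    have x: "x \<in> normal_closure G {x}" and y: "y \<in> normal_closure G {y}"
      unfolding normal_closure_def by auto
    show "x \<in> N \<longleftrightarrow> y \<in> N"
    proof
      assume "x \<in> N"
      hence "normal_closure G {x} \<subseteq> N" using N unfolding normal_closure_def by auto
      thus "y \<in> N" using h y by auto
    next
      assume "y \<in> N"
      hence "normal_closure G {y} \<subseteq> N" using N unfolding normal_closure_def by auto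
      thus "x \<in> N" using h x by auto
    qed
  qed
next
  assume "\<forall>N. N \<lhd> G \<longrightarrow> (x \<in> N \<longleftrightarrow> y \<in> N)"
  hence "{N. N \<lhd> G \<and> {x} \<subseteq> N} = {N. N \<lhd> G \<and> {y} \<subseteq> N}" by auto
  thus "normal_closure G {x} = normal_closure G {y}" unfolding normal_closure_def by simp
qed

lemma normal_inv_mem:
  assumes "group G" "N \<lhd> G" "x \<in> carrier G"
  shows "inv\<^bsub>G\<^esub> x \<in> N \<longleftrightarrow> x \<in> N"
proof -
  interpret group G by fact
  have sg: "subgroup N G" using assms(2) normal_imp_subgroup by blast
  show ?thesis
    by (metis assms(3) inv_inv sg subgroup.m_inv_closed subgroup.mem_carrier)
qed

lemma nc_inv:
  assumes "group G" "x \<in> carrier G"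
  shows "normal_closure G {x} = normal_closure G {inv\<^bsub>G\<^esub> x}"
  using normal_inv_mem[OF assms(1) _ assms(2)] unfolding nc_iff by blast

lemma conj_trans:
  fixes G (structure)
  assumes "group G" "x \<in> carrier G" "conj_in G x y" "conj_in G y z"
  shows "conj_in G x z"
proof -
  interpret group G by fact
  obtain g where g: "g \<in> carrier G" "y = g \<otimes> x \<otimes> inv g" using assms(3) conj_in_def by metis
  obtain h where h: "h \<in> carrier G" "z = h \<otimes> y \<otimes> inv h" using assms(4) conj_in_def by metis
  have "z = (h \<otimes> g) \<otimes> x \<otimes> inv (h \<otimes> g)"
    using g h assms(2) by (simp add: inv_mult_group m_assoc)
  thus ?thesis unfolding conj_in_def using g h by blast
qed

lemma conj_prod:
  assumes "group A" "group B" "a \<in> carrier A" "b \<in> carrier B"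
  shows "conj_in (A \<times>\<times> B) (a, b) (c, d) \<longleftrightarrow> conj_in A a c \<and> conj_in B b d"
proof -
  interpret A: group A by fact
  interpret B: group B by fact
  show ?thesis
    unfolding conj_in_def using assms by auto
qed

lemma smp_inv:
  assumes "group B" "strong_magnus_property B" "b \<in> carrier B"
  shows "conj_in B b (inv\<^bsub>B\<^esub> b)"
  using assms nc_inv[OF assms(1) assms(3)] unfolding strong_magnus_property_def
  by (meson group.inv_closed)

lemma proj_nc:
  assumes "group A" "group B" "a \<in> carrier A" "b \<in> carrier B" "a' \<in> carrier A" "b' \<in> carrier B"
    and "normal_closure (A \<times>\<times> B) {(a, b)} = normal_closure (A \<times>\<times> B) {(a', b')}"
  shows "normal_closure A {a} = normal_closure A {a'} \<and> normal_closure B {b} = normal_closure B {b'}"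
proof -
  interpret A: group A by fact
  interpret B: group B by fact
  have h: "\<And>N. N \<lhd> A \<times>\<times> B \<Longrightarrow> (a, b) \<in> N \<longleftrightarrow> (a', b') \<in> N" using assms(7) unfolding nc_iff by blast
  have 1: "\<And>N. N \<lhd> A \<Longrightarrow> a \<in> N \<longleftrightarrow> a' \<in> N"
  proof -
    fix N assume "N \<lhd> A"
    hence "N \<times> carrier B \<lhd> A \<times>\<times> B" using A.DirProd_normal[OF assms(2) _ B.normal_self] by blast
    from h[OF this] show "a \<in> N \<longleftrightarrow> a' \<in> N" using assms by auto
  qed
  have 2: "\<And>N. N \<lhd> B \<Longrightarrow> b \<in> N \<longleftrightarrow> b' \<in> N"
  proof -
    fix N assume "N \<lhd> B"
    hence "carrier A \<times> N \<lhd> A \<times>\<times> B" using A.DirProd_normal[OF assms(2) A.normal_self] by blast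
    from h[OF this] show "b \<in> N \<longleftrightarrow> b' \<in> N" using assms by auto
  qed
  show ?thesis using 1 2 unfolding nc_iff by blast
qed

lemma slice1_normal:
  assumes "group A" "group B" "N \<lhd> A \<times>\<times> B"
  shows "{x \<in> carrier A. (x, \<one>\<^bsub>B\<^esub>) \<in> N} \<lhd> A"
proof -
  interpret A: group A by fact
  interpret B: group B by fact
  interpret P: group "A \<times>\<times> B" using DirProd_group assms by blast
  have sg: "subgroup N (A \<times>\<times> B)" and cj: "\<And>x h. x \<in> carrier (A \<times>\<times> B) \<Longrightarrow> h \<in> N \<Longrightarrow>
     x \<otimes>\<^bsub>A \<times>\<times> B\<^esub> h \<otimes>\<^bsub>A \<times>\<times> B\<^esub> inv\<^bsub>A \<times>\<times> B\<^esub> x \<in> N"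
    using P.normal_invE[OF assms(3)] by auto
  have sub: "subgroup {x \<in> carrier A. (x, \<one>\<^bsub>B\<^esub>) \<in> N} A"
  proof (rule A.subgroupI)
    show "{x \<in> carrier A. (x, \<one>\<^bsub>B\<^esub>) \<in> N} \<noteq> {}"
      using subgroup.one_closed[OF sg] by auto
  next
    fix a assume a: "a \<in> {x \<in> carrier A. (x, \<one>\<^bsub>B\<^esub>) \<in> N}"
    have "inv\<^bsub>A \<times>\<times> B\<^esub> (a, \<one>\<^bsub>B\<^esub>) \<in> N" using subgroup.m_inv_closed[OF sg] a by blast
    thus "inv\<^bsub>A\<^esub> a \<in> {x \<in> carrier A. (x, \<one>\<^bsub>B\<^esub>) \<in> N}" using a inv_DirProd[OF assms(1,2)] by auto
  next
    fix a c assume a: "a \<in> {x \<in> carrier A. (x, \<one>\<^bsub>B\<^esub>) \<in> N}" and c: "c \<in> {x \<in> carrier A. (x, \<one>\<^bsub>B\<^esub>) \<in> N}"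
    have "(a, \<one>\<^bsub>B\<^esub>) \<otimes>\<^bsub>A \<times>\<times> B\<^esub> (c, \<one>\<^bsub>B\<^esub>) \<in> N" using subgroup.m_closed[OF sg] a c by blast
    thus "a \<otimes>\<^bsub>A\<^esub> c \<in> {x \<in> carrier A. (x, \<one>\<^bsub>B\<^esub>) \<in> N}" using a c by auto
  qed auto
  show ?thesis
  proof (rule A.normal_invI[OF sub])
    fix x h assume x: "x \<in> carrier A" and h: "h \<in> {x \<in> carrier A. (x, \<one>\<^bsub>B\<^esub>) \<in> N}"
    have "(x, \<one>\<^bsub>B\<^esub>) \<otimes>\<^bsub>A \<times>\<times> B\<^esub> (h, \<one>\<^bsub>B\<^esub>) \<otimes>\<^bsub>A \<times>\<times> B\<^esub> inv\<^bsub>A \<times>\<times> B\<^esub> (x, \<one>\<^bsub>B\<^esub>) \<in> N"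
      using cj[of "(x, \<one>\<^bsub>B\<^esub>)" "(h, \<one>\<^bsub>B\<^esub>)"] x h by simp
    thus "x \<otimes>\<^bsub>A\<^esub> h \<otimes>\<^bsub>A\<^esub> inv\<^bsub>A\<^esub> x \<in> {x \<in> carrier A. (x, \<one>\<^bsub>B\<^esub>) \<in> N}"
      using x h assms by auto
  qed
qed

lemma slice2_normal:
  assumes "group A" "group B" "N \<lhd> A \<times>\<times> B"
  shows "{x \<in> carrier B. (\<one>\<^bsub>A\<^esub>, x) \<in> N} \<lhd> B"
proof -
  interpret A: group A by fact
  interpret B: group B by fact
  interpret P: group "A \<times>\<times> B" using DirProd_group assms by blast
  have sg: "subgroup N (A \<times>\<times> B)" and cj: "\<And>x h. x \<in> carrier (A \<times>\<times> B) \<Longrightarrow> h \<in> N \<Longrightarrow>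
     x \<otimes>\<^bsub>A \<times>\<times> B\<^esub> h \<otimes>\<^bsub>A \<times>\<times> B\<^esub> inv\<^bsub>A \<times>\<times> B\<^esub> x \<in> N"
    using P.normal_invE[OF assms(3)] by auto
  have sub: "subgroup {x \<in> carrier B. (\<one>\<^bsub>A\<^esub>, x) \<in> N} B"
  proof (rule B.subgroupI)
    show "{x \<in> carrier B. (\<one>\<^bsub>A\<^esub>, x) \<in> N} \<noteq> {}"
      using subgroup.one_closed[OF sg] by auto
  next
    fix a assume a: "a \<in> {x \<in> carrier B. (\<one>\<^bsub>A\<^esub>, x) \<in> N}"
    have "inv\<^bsub>A \<times>\<times> B\<^esub> (\<one>\<^bsub>A\<^esub>, a) \<in> N" using subgroup.m_inv_closed[OF sg] a by blast
    thus "inv\<^bsub>B\<^esub> a \<in> {x \<in> carrier B. (\<one>\<^bsub>A\<^esub>, x) \<in> N}" using a inv_DirProd[OF assms(1,2)] by auto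
  next
    fix a c assume a: "a \<in> {x \<in> carrier B. (\<one>\<^bsub>A\<^esub>, x) \<in> N}" and c: "c \<in> {x \<in> carrier B. (\<one>\<^bsub>A\<^esub>, x) \<in> N}"
    have "(\<one>\<^bsub>A\<^esub>, a) \<otimes>\<^bsub>A \<times>\<times> B\<^esub> (\<one>\<^bsub>A\<^esub>, c) \<in> N" using subgroup.m_closed[OF sg] a c by blast
    thus "a \<otimes>\<^bsub>B\<^esub> c \<in> {x \<in> carrier B. (\<one>\<^bsub>A\<^esub>, x) \<in> N}" using a c by auto
  qed auto
  show ?thesis
  proof (rule B.normal_invI[OF sub])
    fix x h assume x: "x \<in> carrier B" and h: "h \<in> {x \<in> carrier B. (\<one>\<^bsub>A\<^esub>, x) \<in> N}"
    have "(\<one>\<^bsub>A\<^esub>, x) \<otimes>\<^bsub>A \<times>\<times> B\<^esub> (\<one>\<^bsub>A\<^esub>, h) \<otimes>\<^bsub>A \<times>\<times> B\<^esub> inv\<^bsub>A \<times>\<times> B\<^esub> (\<one>\<^bsub>A\<^esub>, x) \<in> N"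
      using cj[of "(\<one>\<^bsub>A\<^esub>, x)" "(\<one>\<^bsub>A\<^esub>, h)"] x h by simp
    thus "x \<otimes>\<^bsub>B\<^esub> h \<otimes>\<^bsub>B\<^esub> inv\<^bsub>B\<^esub> x \<in> {x \<in> carrier B. (\<one>\<^bsub>A\<^esub>, x) \<in> N}"
      using x h assms by auto
  qed
qed

lemma embed1_nc:
  assumes "group A" "group B" "x \<in> carrier A" "y \<in> carrier A"
    and "normal_closure A {x} = normal_closure A {y}"
  shows "normal_closure (A \<times>\<times> B) {(x, \<one>\<^bsub>B\<^esub>)} = normal_closure (A \<times>\<times> B) {(y, \<one>\<^bsub>B\<^esub>)}"
proof -
  have h: "\<And>N. N \<lhd> A \<Longrightarrow> x \<in> N \<longleftrightarrow> y \<in> N" using assms(5) unfolding nc_iff by blast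
  { fix N assume "N \<lhd> A \<times>\<times> B"
    from h[OF slice1_normal[OF assms(1,2) this]]
    have "(x, \<one>\<^bsub>B\<^esub>) \<in> N \<longleftrightarrow> (y, \<one>\<^bsub>B\<^esub>) \<in> N" using assms(3,4) by auto }
  thus ?thesis unfolding nc_iff by blast
qed

lemma embed2_nc:
  assumes "group A" "group B" "x \<in> carrier B" "y \<in> carrier B"
    and "normal_closure B {x} = normal_closure B {y}"
  shows "normal_closure (A \<times>\<times> B) {(\<one>\<^bsub>A\<^esub>, x)} = normal_closure (A \<times>\<times> B) {(\<one>\<^bsub>A\<^esub>, y)}"
proof -
  have h: "\<And>N. N \<lhd> B \<Longrightarrow> x \<in> N \<longleftrightarrow> y \<in> N" using assms(5) unfolding nc_iff by blast
  { fix N assume "N \<lhd> A \<times>\<times> B"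
    from h[OF slice2_normal[OF assms(1,2) this]]
    have "(\<one>\<^bsub>A\<^esub>, x) \<in> N \<longleftrightarrow> (\<one>\<^bsub>A\<^esub>, y) \<in> N" using assms(3,4) by auto }
  thus ?thesis unfolding nc_iff by blast
qed


theorem proposition4p2:
  fixes A :: "'a monoid" and B :: "'b monoid"
  assumes "group A" and "group B"
    and "finite (carrier A)" and "finite (carrier B)"
  shows "(strong_magnus_property B \<longrightarrow>
            (magnus_property (A \<times>\<times> B) \<longleftrightarrow> magnus_property A))
       \<and> (strong_magnus_property (A \<times>\<times> B) \<longleftrightarrow>
            strong_magnus_property A \<and> strong_magnus_property B)"
proof -
  interpret A: group A by fact
  interpret B: group B by fact
  note gA = assms(1) and gB = assms(2)
  have P1: "magnus_property (A \<times>\<times> B) \<longleftrightarrow> magnus_property A" if sB: "strong_magnus_property B"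
  proof
    assume mp: "magnus_property (A \<times>\<times> B)"
    show "magnus_property A" unfolding magnus_property_def
    proof (intro ballI impI)
      fix x y assume x: "x \<in> carrier A" and y: "y \<in> carrier A"
        and e: "normal_closure A {x} = normal_closure A {y}"
      have "normal_closure (A \<times>\<times> B) {(x, \<one>\<^bsub>B\<^esub>)} = normal_closure (A \<times>\<times> B) {(y, \<one>\<^bsub>B\<^esub>)}"
        using embed1_nc[OF gA gB x y e] .
      hence "conj_in (A \<times>\<times> B) (x, \<one>\<^bsub>B\<^esub>) (y, \<one>\<^bsub>B\<^esub>) \<or>
             conj_in (A \<times>\<times> B) (x, \<one>\<^bsub>B\<^esub>) (inv\<^bsub>A \<times>\<times> B\<^esub> (y, \<one>\<^bsub>B\<^esub>))"
      proof -
        have "(x, \<one>\<^bsub>B\<^esub>) \<in> carrier (A \<times>\<times> B)" "(y, \<one>\<^bsub>B\<^esub>) \<in> carrier (A \<times>\<times> B)" using x y by auto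
        thus ?thesis using mp[unfolded magnus_property_def] \<open>normal_closure (A \<times>\<times> B) {(x, \<one>\<^bsub>B\<^esub>)} = _\<close> by (meson bspec)
      qed
      thus "conj_in A x y \<or> conj_in A x (inv\<^bsub>A\<^esub> y)"
        using conj_prod[OF gA gB x B.one_closed] inv_DirProd[OF gA gB y B.one_closed] by auto
    qed
  next
    assume mp: "magnus_property A"
    show "magnus_property (A \<times>\<times> B)" unfolding magnus_property_def
    proof (intro ballI impI)
      fix p q assume p: "p \<in> carrier (A \<times>\<times> B)" and q: "q \<in> carrier (A \<times>\<times> B)"
        and e: "normal_closure (A \<times>\<times> B) {p} = normal_closure (A \<times>\<times> B) {q}"
      obtain a b where ab: "p = (a, b)" "a \<in> carrier A" "b \<in> carrier B" using p by auto
      obtain a' b' where ab': "q = (a', b')" "a' \<in> carrier A" "b' \<in> carrier B" using q by auto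
      have n: "normal_closure A {a} = normal_closure A {a'}" "normal_closure B {b} = normal_closure B {b'}"
        using proj_nc[OF gA gB ab(2,3) ab'(2,3)] e ab ab' by auto
      have ca: "conj_in A a a' \<or> conj_in A a (inv\<^bsub>A\<^esub> a')" using mp n ab ab' unfolding magnus_property_def by auto
      have cb: "conj_in B b b'" using sB n ab ab' unfolding strong_magnus_property_def by auto
      have cb': "conj_in B b (inv\<^bsub>B\<^esub> b')"
        using conj_trans[OF gB ab(3) cb smp_inv[OF gB sB ab'(3)]] .
      show "conj_in (A \<times>\<times> B) p q \<or> conj_in (A \<times>\<times> B) p (inv\<^bsub>A \<times>\<times> B\<^esub> q)"
        using ca cb cb' conj_prod[OF gA gB ab(2,3)] inv_DirProd[OF gA gB ab'(2,3)] ab ab' by auto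
    qed
  qed
  have P2: "strong_magnus_property (A \<times>\<times> B) \<longleftrightarrow> strong_magnus_property A \<and> strong_magnus_property B"
  proof
    assume mp: "strong_magnus_property (A \<times>\<times> B)"
    have "strong_magnus_property A" unfolding strong_magnus_property_def
    proof (intro ballI impI)
      fix x y assume x: "x \<in> carrier A" and y: "y \<in> carrier A"
        and e: "normal_closure A {x} = normal_closure A {y}"
      have "conj_in (A \<times>\<times> B) (x, \<one>\<^bsub>B\<^esub>) (y, \<one>\<^bsub>B\<^esub>)"
        using embed1_nc[OF gA gB x y e] mp x y unfolding strong_magnus_property_def by auto
      thus "conj_in A x y" using conj_prod[OF gA gB x B.one_closed] by auto
    qed
    moreover have "strong_magnus_property B" unfolding strong_magnus_property_def
    proof (intro ballI impI)
      fix x y assume x: "x \<in> carrier B" and y: "y \<in> carrier B"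
        and e: "normal_closure B {x} = normal_closure B {y}"
      have "conj_in (A \<times>\<times> B) (\<one>\<^bsub>A\<^esub>, x) (\<one>\<^bsub>A\<^esub>, y)"
        using embed2_nc[OF gA gB x y e] mp x y unfolding strong_magnus_property_def by auto
      thus "conj_in B x y" using conj_prod[OF gA gB A.one_closed x] by auto
    qed
    ultimately show "strong_magnus_property A \<and> strong_magnus_property B" ..
  next
    assume sm: "strong_magnus_property A \<and> strong_magnus_property B"
    show "strong_magnus_property (A \<times>\<times> B)" unfolding strong_magnus_property_def
    proof (intro ballI impI)
      fix p q assume p: "p \<in> carrier (A \<times>\<times> B)" and q: "q \<in> carrier (A \<times>\<times> B)"
        and e: "normal_closure (A \<times>\<times> B) {p} = normal_closure (A \<times>\<times> B) {q}"
      obtain a b where ab: "p = (a, b)" "a \<in> carrier A" "b \<in> carrier B" using p by auto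
      obtain a' b' where ab': "q = (a', b')" "a' \<in> carrier A" "b' \<in> carrier B" using q by auto
      have n: "normal_closure A {a} = normal_closure A {a'}" "normal_closure B {b} = normal_closure B {b'}"
        using proj_nc[OF gA gB ab(2,3) ab'(2,3)] e ab ab' by auto
      have "conj_in A a a'" "conj_in B b b'"
        using sm n ab ab' unfolding strong_magnus_property_def by auto
      thus "conj_in (A \<times>\<times> B) p q" using conj_prod[OF gA gB ab(2,3)] ab ab' by auto
    qed
  qed
  show ?thesis using P1 P2 by blast
qed

end
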